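(* Let $t>0$ be fixed and $x_1>0$. Then the characteristic triangles $\Delta(0,t)$ and $\Delta(x_1,t)$ do not intersect in the open quadrant $(0,\infty)^2$.
   Context: Standing assumptions: $u_0,u_b:[0,\infty)\to\mathbb{R}$ bounded measurable with $u_b>0$; $\rho_0,\rho_b:[0,\infty)\to(0,\infty)$ positive locally bounded measurable. For $x,t,y,\tau\ge0$: $F(y,x,t)=\int_0^y[tu_0(\eta)+\eta-x]\rho_0(\eta)\,d\eta$, $G(\tau,x,t)=\int_0^\tau[x-u_b(\eta)(t-\eta)]\rho_b(\eta)u_b(\eta)\,d\eta$, $F(x,t)=\min_{y\ge0}F(y,x,t)$, $G(x,t)=\min_{\tau\ge0}G(\tau,x,t)$ (minima attained); $y_*\le y^*$ smallest/largest minimizers of $F(\cdot,x,t)$, $\tau_*\le\tau^*$ those of $G(\cdot,x,t)$. Characteristic triangle $\Delta(x,t)$ ($x\ge0,t>0$): (1) if $x>0$, $F(x,t)<G(x,t)$: convex hull of $(x,t),(y_*(x,t),0),(y^*(x,t),0)$; (2) if $F(x,t)>G(x,t)$: convex hull of $(x,t),(0,\tau_*(x,t)),(0,\tau^*(x,t))$; (3) if $F(x,t)=G(x,t)$: convex hull of $(x,t),(y^*(x,t),0),(0,\tau^*(x,t)),(0,0)$; (4) if $x=0$, $F(0,t)<G(0,t)$: convex hull of $(0,t),(0,0),(y^*(0,t),0)$. *)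

theory Defs
  imports "HOL-Analysis.Analysis"
begin

definition Ffun :: "(real \<Rightarrow> real) \<Rightarrow> (real \<Rightarrow> real) \<Rightarrow> real \<Rightarrow> real \<Rightarrow> real \<Rightarrow> real" where
  "Ffun u0 rho0 y x t =
     (LINT \<eta>:{0..y}|lebesgue. (t * u0 \<eta> + \<eta> - x) * rho0 \<eta>)"

definition Gfun :: "(real \<Rightarrow> real) \<Rightarrow> (real \<Rightarrow> real) \<Rightarrow> real \<Rightarrow> real \<Rightarrow> real \<Rightarrow> real" where
  "Gfun ub rhob \<tau> x t =
     (LINT \<eta>:{0..\<tau>}|lebesgue. (x - ub \<eta> * (t - \<eta>)) * rhob \<eta> * ub \<eta>)"

definition Fmin :: "(real \<Rightarrow> real) \<Rightarrow> (real \<Rightarrow> real) \<Rightarrow> real \<Rightarrow> real \<Rightarrow> real" where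
  "Fmin u0 rho0 x t = Inf ((\<lambda>y. Ffun u0 rho0 y x t) ` {0..})"

definition Gmin :: "(real \<Rightarrow> real) \<Rightarrow> (real \<Rightarrow> real) \<Rightarrow> real \<Rightarrow> real \<Rightarrow> real" where
  "Gmin ub rhob x t = Inf ((\<lambda>\<tau>. Gfun ub rhob \<tau> x t) ` {0..})"

definition Fargmin :: "(real \<Rightarrow> real) \<Rightarrow> (real \<Rightarrow> real) \<Rightarrow> real \<Rightarrow> real \<Rightarrow> real set" where
  "Fargmin u0 rho0 x t = {y. 0 \<le> y \<and> (\<forall>z\<ge>0. Ffun u0 rho0 y x t \<le> Ffun u0 rho0 z x t)}"

definition Gargmin :: "(real \<Rightarrow> real) \<Rightarrow> (real \<Rightarrow> real) \<Rightarrow> real \<Rightarrow> real \<Rightarrow> real set" where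
  "Gargmin ub rhob x t = {\<tau>. 0 \<le> \<tau> \<and> (\<forall>s\<ge>0. Gfun ub rhob \<tau> x t \<le> Gfun ub rhob s x t)}"

definition y_low where "y_low u0 rho0 x t = Inf (Fargmin u0 rho0 x t)"
definition y_up  where "y_up u0 rho0 x t = Sup (Fargmin u0 rho0 x t)"
definition tau_low where "tau_low ub rhob x t = Inf (Gargmin ub rhob x t)"
definition tau_up  where "tau_up ub rhob x t = Sup (Gargmin ub rhob x t)"

text \<open>Characteristic triangle Delta(x,t), for x >= 0, t > 0; points are (space, time).\<close>
definition char_triangle ::
  "(real \<Rightarrow> real) \<Rightarrow> (real \<Rightarrow> real) \<Rightarrow> (real \<Rightarrow> real) \<Rightarrow> (real \<Rightarrow> real)
     \<Rightarrow> real \<Rightarrow> real \<Rightarrow> (real \<times> real) set" where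
  "char_triangle u0 ub rho0 rhob x t =
     (let Fv = Fmin u0 rho0 x t; Gv = Gmin ub rhob x t in
      if 0 < x \<and> Fv < Gv then
        convex hull {(x, t), (y_low u0 rho0 x t, 0), (y_up u0 rho0 x t, 0)}
      else if Fv > Gv then
        convex hull {(x, t), (0, tau_low ub rhob x t), (0, tau_up ub rhob x t)}
      else if Fv = Gv then
        convex hull {(x, t), (y_up u0 rho0 x t, 0), (0, tau_up ub rhob x t), (0, 0)}
      else
        convex hull {(0, t), (0, 0), (y_up u0 rho0 0 t, 0)})"

end

theory Submission
  imports Defs
begin

lemma int_on:
  fixes f :: "real \<Rightarrow> real"
  assumes "f \<in> borel_measurable (lebesgue_on {0..})" "bounded (f ` {a..b})" "0 \<le> a"
  shows "integrable (lebesgue_on {a..b}) f"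
proof -
  have m: "f \<in> borel_measurable (lebesgue_on {a..b})"
    using measurable_restrict_mono[OF assms(1)] assms(3) by auto
  obtain B where B: "\<And>x. x \<in> {a..b} \<Longrightarrow> norm (f x) \<le> B"
    using assms(2) unfolding bounded_iff by (metis image_eqI)
  show ?thesis
    apply (rule measurable_bounded_by_integrable_imp_lebesgue_integrable[OF m, where g="\<lambda>_. B"])
    using B by auto
qed

lemma pos_int:
  fixes f :: "real \<Rightarrow> real"
  assumes "integrable (lebesgue_on {a..b}) f" "a < b" "\<And>x. x \<in> {a..b} \<Longrightarrow> 0 < f x"
  shows "0 < integral {a..b} f"
proof -
  have e: "integral\<^sup>L (lebesgue_on {a..b}) f = integral {a..b} f"
    using assms(1) by (simp add: lebesgue_integral_eq_integral)
  have nn: "AE x in lebesgue_on {a..b}. 0 \<le> f x"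
    using assms(3) by (intro AE_I2) (auto simp: less_imp_le)
  have "0 \<le> integral\<^sup>L (lebesgue_on {a..b}) f"
    using assms(3) by (intro integral_nonneg_AE nn)
  moreover have "integral\<^sup>L (lebesgue_on {a..b}) f \<noteq> 0"
  proof
    assume "integral\<^sup>L (lebesgue_on {a..b}) f = 0"
    then have "AE x in lebesgue_on {a..b}. f x = 0"
      using integral_nonneg_eq_0_iff_AE[OF assms(1) nn] by simp
    then obtain N where N: "{x \<in> space (lebesgue_on {a..b}). f x \<noteq> 0} \<subseteq> N"
        "emeasure (lebesgue_on {a..b}) N = 0" "N \<in> sets (lebesgue_on {a..b})"
      by (rule AE_E)
    have "{x \<in> space (lebesgue_on {a..b}). f x \<noteq> 0} = {a..b}"
      using assms(3) by (force simp: space_restrict_space)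
    then have "emeasure (lebesgue_on {a..b}) {a..b} \<le> emeasure (lebesgue_on {a..b}) N"
      using N by (metis emeasure_mono)
    moreover have "emeasure (lebesgue_on {a..b}) {a..b} = emeasure lebesgue {a..b}"
      by (rule emeasure_restrict_space) auto
    ultimately show False using N(2) assms(2) by simp
  qed
  ultimately show ?thesis using e by linarith
qed

lemma lint_eq:
  fixes f :: "real \<Rightarrow> real"
  assumes "integrable (lebesgue_on {a..b}) f"
  shows "(LINT x:{a..b}|lebesgue. f x) = integral {a..b} f"
proof -
  have "set_integrable lebesgue {a..b} f"
    using assms unfolding set_integrable_def
    by (subst integrable_restrict_space[symmetric]) auto
  then show ?thesis by (rule set_lebesgue_integral_eq_integral)
qed

lemma ion:
  fixes f :: "real \<Rightarrow> real"
  assumes "\<And>a b. 0 \<le> a \<Longrightarrow> integrable (lebesgue_on {a..b}) f" "0 \<le> a"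
  shows "f integrable_on {a..b}"
  using assms by (intro integrable_on_lebesgue_on) auto

lemma phi_split:
  fixes f :: "real \<Rightarrow> real"
  assumes H: "\<And>a b. 0 \<le> a \<Longrightarrow> integrable (lebesgue_on {a..b}) f" and "0 \<le> a" "a \<le> b"
  shows "integral {0..b} f = integral {0..a} f + integral {a..b} f"
  using Henstock_Kurzweil_Integration.integral_combine[of 0 a b f] ion[OF H, where a=0 and b=b] assms by auto

lemma phi_mono:
  fixes f :: "real \<Rightarrow> real"
  assumes H: "\<And>a b. 0 \<le> a \<Longrightarrow> integrable (lebesgue_on {a..b}) f" and "0 \<le> a" "a \<le> b"
    and "\<And>x. x \<in> {a..b} \<Longrightarrow> 0 \<le> f x"
  shows "integral {0..a} f \<le> integral {0..b} f"
  using phi_split[OF H, where a=a and b=b] integral_nonneg[OF ion[OF H, where a=a and b=b]] assms by auto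

lemma phi_strict:
  fixes f :: "real \<Rightarrow> real"
  assumes H: "\<And>a b. 0 \<le> a \<Longrightarrow> integrable (lebesgue_on {a..b}) f" and "0 \<le> a" "a < b"
    and "\<And>x. x \<in> {a..b} \<Longrightarrow> 0 < f x"
  shows "integral {0..a} f < integral {0..b} f"
  using phi_split[OF H, where a=a and b=b] pos_int[OF H[where a=a and b=b]] assms by auto

lemma phi_cont:
  fixes f :: "real \<Rightarrow> real"
  assumes H: "\<And>a b. 0 \<le> a \<Longrightarrow> integrable (lebesgue_on {a..b}) f"
  shows "continuous_on {0..M} (\<lambda>y. integral {0..y} f)"
  by (rule indefinite_integral_continuous_1[OF ion[OF H]]) auto

definition AM :: "(real \<Rightarrow> real) \<Rightarrow> real set" where
  "AM \<Phi> = {y. 0 \<le> y \<and> (\<forall>z\<ge>0. \<Phi> y \<le> \<Phi> z)}"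

lemma argmin_abs:
  fixes \<Phi> :: "real \<Rightarrow> real"
  assumes "continuous_on {0..M} \<Phi>" "0 \<le> M" "\<And>y. y > M \<Longrightarrow> \<Phi> M < \<Phi> y"
  shows "AM \<Phi> \<noteq> {}" "AM \<Phi> \<subseteq> {0..M}"
proof -
  obtain y0 where y0: "y0 \<in> {0..M}" "\<And>y. y \<in> {0..M} \<Longrightarrow> \<Phi> y0 \<le> \<Phi> y"
    using continuous_attains_inf[of "{0..M}" \<Phi>] assms(1,2) by auto
  have "\<Phi> y0 \<le> \<Phi> z" if "z \<ge> 0" for z
  proof (cases "z \<le> M")
    case True then show ?thesis using y0 that by auto
  next
    case False then show ?thesis using y0(2)[of M] assms(2) assms(3)[of z] by auto
  qed
  then show "AM \<Phi> \<noteq> {}" using y0 unfolding AM_def by auto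
  show "AM \<Phi> \<subseteq> {0..M}"
  proof
    fix y assume y: "y \<in> AM \<Phi>"
    show "y \<in> {0..M}"
    proof (rule ccontr)
      assume "y \<notin> {0..M}"
      then have "y > M" using y unfolding AM_def by auto
      then show False using assms(3)[of y] y assms(2) unfolding AM_def by force
    qed
  qed
qed

lemma AM_inf:
  fixes \<Phi> :: "real \<Rightarrow> real"
  assumes "y \<in> AM \<Phi>"
  shows "Inf (\<Phi> ` {0..}) = \<Phi> y"
  using assms unfolding AM_def by (intro cInf_eq_minimum) auto

lemma AM_le:
  fixes \<Phi> :: "real \<Rightarrow> real"
  assumes "y \<in> AM \<Phi>" "z \<ge> 0"
  shows "Inf (\<Phi> ` {0..}) \<le> \<Phi> z"
  using assms AM_inf[OF assms(1)] unfolding AM_def by auto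


lemma geo0:
  fixes t p q :: real
  shows "convex hull {(0::real,t),(0,p),(0,q)} \<inter> ({0<..} \<times> {0<..}) = {}"
proof -
  have c: "convex {z. inner (1::real,0::real) z \<le> 0}" by (rule convex_halfspace_le)
  have "convex hull {(0,t),(0,p),(0,q)} \<subseteq> {z. inner (1::real,0::real) z \<le> 0}"
    by (rule hull_minimal[where S=convex, OF _ c]) (auto simp: inner_prod_def)
  then have "fst z \<le> 0" if "z \<in> convex hull {(0,t),(0,p),(0,q)}" for z :: "real \<times> real"
    using that by (auto simp: inner_prod_def)
  then show ?thesis by fastforce
qed

lemma geo:
  fixes t x1 Y a b \<tau> :: real
  assumes "0 < t" "0 < x1" "0 \<le> Y" "Y \<le> a" "a \<le> b" "0 \<le> \<tau>" "\<tau> \<le> t"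
    and T0: "T0 \<subseteq> convex hull {(0,t),(Y,0),(0,\<tau>),(0,0)}"
  shows "T0 \<inter> convex hull {(x1,t),(a,0),(b,0)} \<inter> ({0<..} \<times> {0<..}) = {}"
proof -
  have c0: "convex {z. inner (t,Y) z \<le> Y*t}" by (rule convex_halfspace_le)
  have c1: "convex {z. inner (t,a-x1) z \<ge> a*t}" by (rule convex_halfspace_ge)
  have S0: "convex hull {(0,t),(Y,0),(0,\<tau>),(0,0)} \<subseteq> {z. inner (t,Y) z \<le> Y*t}"
    apply (rule hull_minimal[where S=convex, OF _ c0])
    using assms by (auto simp: inner_prod_def mult_left_mono)
  have S1: "convex hull {(x1,t),(a,0),(b,0)} \<subseteq> {z. inner (t,a-x1) z \<ge> a*t}"
    apply (rule hull_minimal[where S=convex, OF _ c1])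
    using assms by (auto simp: inner_prod_def mult_right_mono algebra_simps)
  show ?thesis
  proof (rule ccontr)
    assume "\<not> ?thesis"
    then obtain x w where xs: "(x,w) \<in> T0" "(x,w) \<in> convex hull {(x1,t),(a,0),(b,0)}" "x > 0" "w > 0"
      by auto
    have h0: "t*x + Y*w \<le> Y*t" using xs(1) T0 S0 by (force simp: inner_prod_def)
    have h1: "t*x + (a-x1)*w \<ge> a*t" using xs(2) S1 by (force simp: inner_prod_def)
    have "t*x > 0" using xs assms by simp
    then have "Y*(t-w) > 0" using h0 by (simp add: algebra_simps)
    then have ts: "t - w > 0" using assms(3) by (metis mult_le_0_iff not_le)
    have "Y*(t-w) \<le> a*(t-w)" using ts assms(4) by (simp add: mult_right_mono)
    then have "x1 * w \<le> 0" using h0 h1 by (simp add: algebra_simps)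
    then show False using xs assms by (simp add: mult_le_0_iff)
  qed
qed

lemma bnd_prod:
  fixes f g :: "real \<Rightarrow> real"
  assumes "\<And>\<eta>. \<eta> \<in> S \<Longrightarrow> \<bar>f \<eta>\<bar> \<le> A" "\<And>\<eta>. \<eta> \<in> S \<Longrightarrow> \<bar>g \<eta>\<bar> \<le> B"
  shows "\<eta> \<in> S \<Longrightarrow> \<bar>f \<eta> * g \<eta>\<bar> \<le> A * B"
proof -
  assume e: "\<eta> \<in> S"
  have "0 \<le> A" using assms(1)[OF e] by linarith
  then show ?thesis unfolding abs_mult using assms e by (intro mult_mono) auto
qed

lemma bnd_of:
  fixes f :: "real \<Rightarrow> real"
  assumes "bounded (f ` S)"
  obtains B where "\<And>\<eta>. \<eta> \<in> S \<Longrightarrow> \<bar>f \<eta>\<bar> \<le> B"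
  using assms unfolding bounded_iff by (metis image_eqI real_norm_def)

lemma bnd_to:
  fixes f :: "real \<Rightarrow> real"
  assumes "\<And>\<eta>. \<eta> \<in> S \<Longrightarrow> \<bar>f \<eta>\<bar> \<le> B"
  shows "bounded (f ` S)"
  using assms unfolding bounded_iff by auto

lemma meas_id: "(\<lambda>x::real. x) \<in> borel_measurable (lebesgue_on {0..})"
  by (rule continuous_imp_measurable_on_sets_lebesgue) (auto simp: continuous_on_id)


theorem lemma2p10:
  fixes u0 ub rho0 rhob :: "real \<Rightarrow> real" and t x1 :: real
  assumes u0_meas: "u0 \<in> borel_measurable (lebesgue_on {0..})"
    and u0_bdd: "bounded (u0 ` {0..})"
    and ub_meas: "ub \<in> borel_measurable (lebesgue_on {0..})"
    and ub_bdd: "bounded (ub ` {0..})"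
    and ub_pos: "\<And>\<eta>. 0 \<le> \<eta> \<Longrightarrow> 0 < ub \<eta>"
    and rho0_meas: "rho0 \<in> borel_measurable (lebesgue_on {0..})"
    and rho0_pos: "\<And>\<eta>. 0 \<le> \<eta> \<Longrightarrow> 0 < rho0 \<eta>"
    and rho0_locbdd: "\<And>b. bounded (rho0 ` {0..b})"
    and rhob_meas: "rhob \<in> borel_measurable (lebesgue_on {0..})"
    and rhob_pos: "\<And>\<eta>. 0 \<le> \<eta> \<Longrightarrow> 0 < rhob \<eta>"
    and rhob_locbdd: "\<And>b. bounded (rhob ` {0..b})"
    and t_pos: "0 < t"
    and x1_pos: "0 < x1"
  shows "char_triangle u0 ub rho0 rhob 0 t \<inter> char_triangle u0 ub rho0 rhob x1 t
           \<inter> ({0<..} \<times> {0<..}) = {}"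
proof -
  obtain Bu where Bu: "\<And>\<eta>. \<eta> \<in> {0..} \<Longrightarrow> \<bar>u0 \<eta>\<bar> \<le> Bu" using bnd_of[OF u0_bdd] by blast
  obtain Bb where Bb: "\<And>\<eta>. \<eta> \<in> {0..} \<Longrightarrow> \<bar>ub \<eta>\<bar> \<le> Bb" using bnd_of[OF ub_bdd] by blast
  define f where "f x \<eta> = (t * u0 \<eta> + \<eta> - x) * rho0 \<eta>" for x \<eta>
  define g where "g x \<eta> = (x - ub \<eta> * (t - \<eta>)) * rhob \<eta> * ub \<eta>" for x \<eta>
  define h where "h \<eta> = rhob \<eta> * ub \<eta>" for \<eta>
  define k where "k \<eta> = ub \<eta> * (t - \<eta>) * rhob \<eta> * ub \<eta>" for \<eta>
  have mf: "f x \<in> borel_measurable (lebesgue_on {0..})" for x unfolding f_def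
    by (intro borel_measurable_times borel_measurable_add borel_measurable_diff borel_measurable_const meas_id u0_meas rho0_meas)
  have mg: "g x \<in> borel_measurable (lebesgue_on {0..})" for x unfolding g_def
    by (intro borel_measurable_times borel_measurable_add borel_measurable_diff borel_measurable_const meas_id ub_meas rhob_meas)
  have mh: "h \<in> borel_measurable (lebesgue_on {0..})" unfolding h_def
    by (intro borel_measurable_times ub_meas rhob_meas)
  have mk: "k \<in> borel_measurable (lebesgue_on {0..})" unfolding k_def
    by (intro borel_measurable_times borel_measurable_add borel_measurable_diff borel_measurable_const meas_id ub_meas rhob_meas)
  have sub: "{a..b} \<subseteq> {0..b}" "{a..b} \<subseteq> {0..}" if "0 \<le> a" for a b :: real using that by auto
  have bf: "bounded (f x ` {a..b})" if "0 \<le> a" for x a b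
  proof -
    obtain C where C: "\<And>\<eta>. \<eta> \<in> {0..b} \<Longrightarrow> \<bar>rho0 \<eta>\<bar> \<le> C" using bnd_of[OF rho0_locbdd] by blast
    have "\<bar>t * u0 \<eta> + \<eta> - x\<bar> \<le> t * Bu + \<bar>b\<bar> + \<bar>x\<bar>" if "\<eta> \<in> {a..b}" for \<eta>
    proof -
      have "\<bar>t * u0 \<eta>\<bar> \<le> t * Bu" using Bu[of \<eta>] that \<open>0 \<le> a\<close> t_pos
        by (auto simp: abs_mult intro: mult_left_mono)
      then show ?thesis using that \<open>0 \<le> a\<close> by auto
    qed
    then have "\<bar>f x \<eta>\<bar> \<le> (t * Bu + \<bar>b\<bar> + \<bar>x\<bar>) * C" if "\<eta> \<in> {a..b}" for \<eta>
      unfolding f_def using that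
      by (intro bnd_prod[where S="{a..b}" and f="\<lambda>\<eta>. t * u0 \<eta> + \<eta> - x" and g=rho0])
        (use C \<open>0 \<le> a\<close> in force)+
    then show ?thesis by (rule bnd_to)
  qed
  have bub: "\<bar>ub \<eta> * (t - \<eta>)\<bar> \<le> Bb * (t + \<bar>b\<bar>)" if "0 \<le> a" "\<eta> \<in> {a..b}" for a b \<eta>
    unfolding abs_mult using Bb[of \<eta>] that t_pos
    by (intro mult_mono) auto
  have bg: "bounded (g x ` {a..b})" "bounded (k ` {a..b})" "bounded (h ` {a..b})"
    "bounded (rho0 ` {a..b})" if "0 \<le> a" for x a b
  proof -
    obtain C where C: "\<And>\<eta>. \<eta> \<in> {0..b} \<Longrightarrow> \<bar>rhob \<eta>\<bar> \<le> C" using bnd_of[OF rhob_locbdd] by blast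
    obtain D where D: "\<And>\<eta>. \<eta> \<in> {0..b} \<Longrightarrow> \<bar>rho0 \<eta>\<bar> \<le> D" using bnd_of[OF rho0_locbdd] by blast
    have C': "\<And>\<eta>. \<eta> \<in> {a..b} \<Longrightarrow> \<bar>rhob \<eta>\<bar> \<le> C" using C that by auto
    have B': "\<And>\<eta>. \<eta> \<in> {a..b} \<Longrightarrow> \<bar>ub \<eta>\<bar> \<le> Bb" using Bb that by auto
    have b1: "\<bar>x - ub \<eta> * (t - \<eta>)\<bar> \<le> \<bar>x\<bar> + Bb * (t + \<bar>b\<bar>)" if "\<eta> \<in> {a..b}" for \<eta>
      using bub[OF \<open>0 \<le> a\<close> that] by linarith
    have b2: "\<bar>(x - ub \<eta> * (t - \<eta>)) * rhob \<eta>\<bar> \<le> (\<bar>x\<bar> + Bb * (t + \<bar>b\<bar>)) * C" if "\<eta> \<in> {a..b}" for \<eta>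
      by (rule bnd_prod[where S="{a..b}" and f="\<lambda>\<eta>. x - ub \<eta> * (t - \<eta>)" and g=rhob, OF b1 C' that])
    have "\<bar>g x \<eta>\<bar> \<le> (\<bar>x\<bar> + Bb * (t + \<bar>b\<bar>)) * C * Bb" if "\<eta> \<in> {a..b}" for \<eta>
      unfolding g_def by (rule bnd_prod[where S="{a..b}" and f="\<lambda>\<eta>. (x - ub \<eta> * (t - \<eta>)) * rhob \<eta>" and g=ub, OF b2 B' that])
    then show "bounded (g x ` {a..b})" by (rule bnd_to)
    have b3: "\<bar>ub \<eta> * (t - \<eta>) * rhob \<eta>\<bar> \<le> (Bb * (t + \<bar>b\<bar>)) * C" if "\<eta> \<in> {a..b}" for \<eta>
      by (rule bnd_prod[where S="{a..b}" and f="\<lambda>\<eta>. ub \<eta> * (t - \<eta>)" and g=rhob, OF bub[OF \<open>0 \<le> a\<close>] C' that])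
    have "\<bar>k \<eta>\<bar> \<le> (Bb * (t + \<bar>b\<bar>)) * C * Bb" if "\<eta> \<in> {a..b}" for \<eta>
      unfolding k_def by (rule bnd_prod[where S="{a..b}" and f="\<lambda>\<eta>. ub \<eta> * (t - \<eta>) * rhob \<eta>" and g=ub, OF b3 B' that])
    then show "bounded (k ` {a..b})" by (rule bnd_to)
    have "\<bar>h \<eta>\<bar> \<le> C * Bb" if "\<eta> \<in> {a..b}" for \<eta>
      unfolding h_def by (rule bnd_prod[where S="{a..b}", OF C' B' that])
    then show "bounded (h ` {a..b})" by (rule bnd_to)
    show "bounded (rho0 ` {a..b})" using D that by (intro bnd_to[where B=D]) auto
  qed
  have Hf: "integrable (lebesgue_on {a..b}) (f x)" if "0 \<le> a" for x a b
    using that by (intro int_on[OF mf bf]) auto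
  have Hg: "integrable (lebesgue_on {a..b}) (g x)" if "0 \<le> a" for x a b
    using that by (intro int_on[OF mg bg(1)]) auto
  have Hk: "\<And>a b. 0 \<le> a \<Longrightarrow> integrable (lebesgue_on {a..b}) k"
    by (rule int_on[OF mk bg(2)])
  have Hh: "\<And>a b. 0 \<le> a \<Longrightarrow> integrable (lebesgue_on {a..b}) h"
    by (rule int_on[OF mh bg(3)])
  have Hr: "\<And>a b. 0 \<le> a \<Longrightarrow> integrable (lebesgue_on {a..b}) rho0"
    by (rule int_on[OF rho0_meas bg(4)])
  have Fe: "Ffun u0 rho0 y x t = integral {0..y} (f x)" for y x
    unfolding Ffun_def using lint_eq[OF Hf[of 0 y x]] by (simp add: f_def)
  have Ge: "Gfun ub rhob y x t = integral {0..y} (g x)" for y x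
    unfolding Gfun_def using lint_eq[OF Hg[of 0 y x]] by (simp add: g_def)
  define \<Phi>F where "\<Phi>F x y = integral {0..y} (f x)" for x y
  define \<Phi>G where "\<Phi>G x y = integral {0..y} (g x)" for x y
  have FA: "Fargmin u0 rho0 x t = AM (\<Phi>F x)" for x
    unfolding Fargmin_def AM_def Fe \<Phi>F_def by simp
  have GA: "Gargmin ub rhob x t = AM (\<Phi>G x)" for x
    unfolding Gargmin_def AM_def Ge \<Phi>G_def by simp
  have FM: "Fmin u0 rho0 x t = Inf (\<Phi>F x ` {0..})" for x
    unfolding Fmin_def Fe \<Phi>F_def by simp
  have GM: "Gmin ub rhob x t = Inf (\<Phi>G x ` {0..})" for x
    unfolding Gmin_def Ge \<Phi>G_def by simp
  define MF where "MF x = max 0 (x + t * Bu + 1)" for x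
  have fpos: "0 < f x \<eta>" if "\<eta> \<ge> MF x" for x \<eta>
  proof -
    have e: "0 \<le> \<eta>" "\<eta> \<ge> x + t * Bu + 1" using that unfolding MF_def by auto
    have "-Bu \<le> u0 \<eta>" using Bu[of \<eta>] e by auto
    then have "t * (-Bu) \<le> t * u0 \<eta>" using t_pos by (intro mult_left_mono) auto
    then have "0 < t * u0 \<eta> + \<eta> - x" using e by auto
    then show ?thesis unfolding f_def using rho0_pos[OF e(1)] by simp
  qed
  have FAM: "AM (\<Phi>F x) \<noteq> {}" "AM (\<Phi>F x) \<subseteq> {0..MF x}" for x
  proof -
    have "\<Phi>F x (MF x) < \<Phi>F x y" if "y > MF x" for y
      unfolding \<Phi>F_def
      by (rule phi_strict[OF Hf]) (use that fpos in \<open>auto simp: MF_def\<close>)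
    moreover have "continuous_on {0..MF x} (\<Phi>F x)" unfolding \<Phi>F_def by (rule phi_cont[OF Hf])
    moreover have "0 \<le> MF x" unfolding MF_def by simp
    ultimately show "AM (\<Phi>F x) \<noteq> {}" "AM (\<Phi>F x) \<subseteq> {0..MF x}" using argmin_abs by blast+
  qed
  have gnn: "0 \<le> g x \<eta>" if "\<eta> \<ge> t" "x \<ge> 0" for x \<eta>
  proof -
    have e: "0 \<le> \<eta>" using that t_pos by auto
    have "ub \<eta> * (t - \<eta>) \<le> 0" using ub_pos[OF e] that by (intro mult_nonneg_nonpos) auto
    then show ?thesis unfolding g_def using rhob_pos[OF e] ub_pos[OF e] that by simp
  qed
  have gpos: "0 < g x \<eta>" if "\<eta> > t" "x \<ge> 0" for x \<eta>
  proof -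
    have e: "0 \<le> \<eta>" using that t_pos by auto
    have "ub \<eta> * (t - \<eta>) < 0" using ub_pos[OF e] that by (intro mult_pos_neg) auto
    then show ?thesis unfolding g_def using rhob_pos[OF e] ub_pos[OF e] that by simp
  qed
  have GAM: "AM (\<Phi>G x) \<noteq> {}" "AM (\<Phi>G x) \<subseteq> {0..t}" if "x \<ge> 0" for x
  proof -
    have "\<Phi>G x t < \<Phi>G x y" if "y > t" for y
    proof -
      have "\<Phi>G x t \<le> \<Phi>G x ((t+y)/2)" unfolding \<Phi>G_def
        by (rule phi_mono[OF Hg]) (use \<open>y > t\<close> t_pos gnn \<open>x \<ge> 0\<close> in auto)
      also have "\<dots> < \<Phi>G x y" unfolding \<Phi>G_def
        by (rule phi_strict[OF Hg]) (use \<open>y > t\<close> t_pos gpos \<open>x \<ge> 0\<close> in auto)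
      finally show ?thesis .
    qed
    moreover have "continuous_on {0..t} (\<Phi>G x)" unfolding \<Phi>G_def by (rule phi_cont[OF Hg])
    ultimately show "AM (\<Phi>G x) \<noteq> {}" "AM (\<Phi>G x) \<subseteq> {0..t}" using argmin_abs t_pos less_imp_le by blast+
  qed
  have ionf: "f x integrable_on {0..y}" for x y by (rule ion) (auto intro: Hf)
  have ionr: "rho0 integrable_on {0..y}" for y by (rule ion) (auto intro: Hr)
  have iong: "g x integrable_on {0..y}" for x y by (rule ion) (auto intro: Hg)
  have ionh: "h integrable_on {0..y}" for y by (rule ion) (auto intro: Hh)
  have decF: "\<Phi>F x1 y = \<Phi>F 0 y - x1 * integral {0..y} rho0" for y
  proof -
    have "f x1 = (\<lambda>\<eta>. f 0 \<eta> - x1 * rho0 \<eta>)" by (auto simp: f_def algebra_simps)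
    then have "\<Phi>F x1 y = integral {0..y} (\<lambda>\<eta>. f 0 \<eta> - x1 * rho0 \<eta>)" unfolding \<Phi>F_def by simp
    also have "\<dots> = \<Phi>F 0 y - integral {0..y} (\<lambda>\<eta>. x1 * rho0 \<eta>)"
      unfolding \<Phi>F_def by (rule integral_diff[OF ionf]) (rule integrable_on_mult_right[OF ionr])
    also have "\<dots> = \<Phi>F 0 y - x1 * integral {0..y} rho0"
      using integral_mult[OF ionr, of x1 y] by simp
    finally show ?thesis .
  qed
  have decG: "\<Phi>G x1 y = \<Phi>G 0 y + x1 * integral {0..y} h" for y
  proof -
    have "g x1 = (\<lambda>\<eta>. g 0 \<eta> + x1 * h \<eta>)" by (auto simp: g_def h_def algebra_simps)
    then have "\<Phi>G x1 y = integral {0..y} (\<lambda>\<eta>. g 0 \<eta> + x1 * h \<eta>)" unfolding \<Phi>G_def by simp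
    also have "\<dots> = \<Phi>G 0 y + integral {0..y} (\<lambda>\<eta>. x1 * h \<eta>)"
      unfolding \<Phi>G_def by (rule integral_add[OF iong]) (rule integrable_on_mult_right[OF ionh])
    also have "\<dots> = \<Phi>G 0 y + x1 * integral {0..y} h"
      using integral_mult[OF ionh, of x1 y] by simp
    finally show ?thesis .
  qed
  have g0k: "g 0 = (\<lambda>\<eta>. - k \<eta>)" by (auto simp: g_def k_def)
  have kint: "0 < integral {0..t} k"
  proof -
    have "integral {0..0} k < integral {0..t/2} k"
    proof (rule phi_strict[OF Hk])
      fix \<eta> assume e: "\<eta> \<in> {0..t/2}"
      then show "0 < k \<eta>" unfolding k_def using ub_pos[of \<eta>] rhob_pos[of \<eta>] t_pos by auto
    qed (use t_pos in auto)
    also have "\<dots> \<le> integral {0..t} k"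
    proof (rule phi_mono[OF Hk])
      fix \<eta> assume e: "\<eta> \<in> {t/2..t}"
      then show "0 \<le> k \<eta>" unfolding k_def using ub_pos[of \<eta>] rhob_pos[of \<eta>] t_pos by auto
    qed (use t_pos in auto)
    finally show ?thesis by simp
  qed
  obtain y0 where y0: "y0 \<in> AM (\<Phi>F 0)" using FAM(1) by blast
  obtain y1 where y1: "y1 \<in> AM (\<Phi>F x1)" using FAM(1) by blast
  obtain \<tau>0 where \<tau>0: "\<tau>0 \<in> AM (\<Phi>G 0)" using GAM(1)[of 0] by auto
  obtain \<tau>1 where \<tau>1: "\<tau>1 \<in> AM (\<Phi>G x1)" using GAM(1)[of x1] x1_pos by auto
  have Fle: "Fmin u0 rho0 x1 t \<le> Fmin u0 rho0 0 t"
  proof -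
    have y00: "0 \<le> y0" using y0 unfolding AM_def by auto
    have "0 \<le> integral {0..y0} rho0" using rho0_pos by (intro integral_nonneg[OF ionr]) (auto simp: less_imp_le)
    then have "0 \<le> x1 * integral {0..y0} rho0" using x1_pos by simp
    then show ?thesis unfolding FM using AM_le[OF y1 y00] AM_inf[OF y0] decF[of y0] by linarith
  qed
  have Glt: "Gmin ub rhob 0 t < Gmin ub rhob x1 t"
  proof -
    have t10: "0 \<le> \<tau>1" using \<tau>1 unfolding AM_def by auto
    have e1: "Gmin ub rhob x1 t = \<Phi>G 0 \<tau>1 + x1 * integral {0..\<tau>1} h"
      unfolding GM using AM_inf[OF \<tau>1] decG by simp
    show ?thesis
    proof (cases "\<tau>1 = 0")
      case True
      have "Gmin ub rhob 0 t \<le> \<Phi>G 0 t" unfolding GM using AM_le[OF \<tau>0, of t] t_pos by simp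
      also have "\<dots> < 0" unfolding \<Phi>G_def g0k using kint by simp
      finally show ?thesis using e1 True unfolding \<Phi>G_def by simp
    next
      case False
      then have "\<tau>1 > 0" using t10 by simp
      have "integral {0..0} h < integral {0..\<tau>1} h"
      proof (rule phi_strict[OF Hh])
        fix \<eta> assume e: "\<eta> \<in> {0..\<tau>1}"
        then show "0 < h \<eta>" unfolding h_def using ub_pos[of \<eta>] rhob_pos[of \<eta>] by auto
      qed (use \<open>\<tau>1 > 0\<close> in auto)
      then have "0 < x1 * integral {0..\<tau>1} h" using x1_pos by simp
      moreover have "Gmin ub rhob 0 t \<le> \<Phi>G 0 \<tau>1" unfolding GM using AM_le[OF \<tau>0 t10] by simp
      ultimately show ?thesis using e1 by linarith
    qed
  qed
  define A0 where "A0 = AM (\<Phi>F 0)"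
  define A1 where "A1 = AM (\<Phi>F x1)"
  define B0 where "B0 = AM (\<Phi>G 0)"
  have A0ne: "A0 \<noteq> {}" and A1ne: "A1 \<noteq> {}" and B0ne: "B0 \<noteq> {}"
    unfolding A0_def A1_def B0_def using FAM(1) GAM(1)[of 0] by auto
  have A0s: "A0 \<subseteq> {0..MF 0}" and A1s: "A1 \<subseteq> {0..MF x1}" and B0s: "B0 \<subseteq> {0..t}"
    unfolding A0_def A1_def B0_def using FAM(2) GAM(2)[of 0] by auto
  have bA0: "bdd_above A0" using A0s unfolding bdd_above_def by (intro exI[of _ "MF 0"]) auto
  have bA1: "bdd_above A1" using A1s unfolding bdd_above_def by (intro exI[of _ "MF x1"]) auto
  have bA1': "bdd_below A1" using A1s unfolding bdd_below_def by (intro exI[of _ 0]) auto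
  have bB0: "bdd_above B0" using B0s unfolding bdd_above_def by (intro exI[of _ t]) auto
  have Yeq: "y_up u0 rho0 0 t = Sup A0" unfolding y_up_def FA A0_def ..
  have aeq: "y_low u0 rho0 x1 t = Inf A1" unfolding y_low_def FA A1_def ..
  have beq: "y_up u0 rho0 x1 t = Sup A1" unfolding y_up_def FA A1_def ..
  have teq: "tau_up ub rhob 0 t = Sup B0" unfolding tau_up_def GA B0_def ..
  have ord: "p \<le> q" if "p \<in> A0" "q \<in> A1" for p q
  proof (rule ccontr)
    assume "\<not> p \<le> q"
    then have qp: "q < p" by simp
    have q0: "0 \<le> q" using that(2) unfolding A1_def AM_def by auto
    have p0: "0 \<le> p" using that(1) unfolding A0_def AM_def by auto
    have "integral {0..q} rho0 < integral {0..p} rho0"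
      by (rule phi_strict[OF Hr]) (use q0 qp rho0_pos in auto)
    then have "x1 * integral {0..q} rho0 < x1 * integral {0..p} rho0" using x1_pos by simp
    moreover have "\<Phi>F 0 p \<le> \<Phi>F 0 q" using that(1) q0 unfolding A0_def AM_def by auto
    moreover have "\<Phi>F x1 q \<le> \<Phi>F x1 p" using that(2) p0 unfolding A1_def AM_def by auto
    ultimately show False using decF[of p] decF[of q] by linarith
  qed
  have Y0: "0 \<le> Sup A0"
  proof -
    obtain p where "p \<in> A0" using A0ne by auto
    then show ?thesis using cSup_upper[OF _ bA0, of p] A0s by force
  qed
  have Ya: "Sup A0 \<le> Inf A1"
    by (rule cInf_greatest[OF A1ne], rule cSup_least[OF A0ne]) (use ord in auto)
  have ab: "Inf A1 \<le> Sup A1" by (rule cInf_le_cSup[OF A1ne bA1 bA1'])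
  have tau0: "0 \<le> Sup B0"
  proof -
    obtain p where "p \<in> B0" using B0ne by auto
    then show ?thesis using cSup_upper[OF _ bB0, of p] B0s by force
  qed
  have taut: "Sup B0 \<le> t" by (rule cSup_least[OF B0ne]) (use B0s in auto)
  show ?thesis
  proof (cases "Fmin u0 rho0 0 t > Gmin ub rhob 0 t")
    case True
    then have "char_triangle u0 ub rho0 rhob 0 t =
        convex hull {(0, t), (0, tau_low ub rhob 0 t), (0, tau_up ub rhob 0 t)}"
      unfolding char_triangle_def Let_def by simp
    then show ?thesis using geo0[of t "tau_low ub rhob 0 t" "tau_up ub rhob 0 t"] by auto
  next
    case False
    note notgt = False
    then have lt: "Fmin u0 rho0 x1 t < Gmin ub rhob x1 t" using Fle Glt by linarith
    have D1: "char_triangle u0 ub rho0 rhob x1 t =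
        convex hull {(x1, t), (y_low u0 rho0 x1 t, 0), (y_up u0 rho0 x1 t, 0)}"
      unfolding char_triangle_def Let_def using lt x1_pos by simp
    have D0: "char_triangle u0 ub rho0 rhob 0 t \<subseteq>
        convex hull {(0, t), (y_up u0 rho0 0 t, 0), (0, tau_up ub rhob 0 t), (0, 0)}"
    proof (cases "Fmin u0 rho0 0 t = Gmin ub rhob 0 t")
      case True
      then show ?thesis unfolding char_triangle_def Let_def by simp
    next
      case False
      then have "char_triangle u0 ub rho0 rhob 0 t = convex hull {(0, t), (0, 0), (y_up u0 rho0 0 t, 0)}"
        using notgt unfolding char_triangle_def Let_def by auto
      then show ?thesis by (auto intro!: hull_mono)
    qed
    show ?thesis unfolding D1
      by (rule geo[OF t_pos x1_pos _ _ _ _ _ D0]) (use Y0 Ya ab tau0 taut Yeq aeq beq teq in auto)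
  qed
qed
end
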